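(* Let $n>1$ be an integer and $\varphi(z)=z|z|^{n-2}$. For a constant $B>0$ consider the problem \[ \left(\varphi(u'(r))\right)'+\frac{n-1}{r}\varphi(u'(r))+Be^{u}=0 \quad (0<r<1),\qquad u'(0)=u(1)=0 . \] There is a constant $B(n)>0$ such that this problem has exactly two solutions for $0<B<B(n)$, exactly one solution for $B=B(n)$, and no solutions for $B>B(n)$.
   Context: With $\varphi(z)=z|z|^{p-2}$ and $p=n$, the operator $\left(\varphi(u')\right)'+\frac{n-1}{r}\varphi(u')$ is the radial $n$-Laplacian in $\mathbb{R}^n$; the problem is the radial Dirichlet problem on the unit ball. *)

theory Defs
  imports "HOL-Analysis.Analysis"
begin

definition phi :: "nat \<Rightarrow> real \<Rightarrow> real" where
  "phi n z = z * \<bar>z\<bar> ^ (n - 2)"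

definition is_solution :: "nat \<Rightarrow> real \<Rightarrow> (real \<Rightarrow> real) \<Rightarrow> bool" where
  "is_solution n B u \<longleftrightarrow>
     (\<exists>u'. (\<forall>r\<in>{0..1}. (u has_real_derivative u' r) (at r within {0..1}))
        \<and> continuous_on {0..1} u'
        \<and> (\<forall>r\<in>{0<..<1}. ((\<lambda>s. phi n (u' s)) has_real_derivative
               (- ((real n - 1) / r) * phi n (u' r) - B * exp (u r))) (at r))
        \<and> u' 0 = 0 \<and> u 1 = 0)"

text \<open>Solutions are functions on [0,1]; we normalise them to 0 outside [0,1]
  so that distinct elements of this set are distinct solutions on [0,1].\<close>
definition solution_set :: "nat \<Rightarrow> real \<Rightarrow> (real \<Rightarrow> real) set" where
  "solution_set n B = {u. is_solution n B u \<and> (\<forall>r. r \<notin> {0..1} \<longrightarrow> u r = 0)}"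

end

theory Submission
  imports Defs
begin


lemma deriv_closed:
  fixes f f' :: "real \<Rightarrow> real"
  assumes ab: "a < b" and cf: "continuous_on {a..b} f" and cf': "continuous_on {a..b} f'"
    and d: "\<And>x. x \<in> {a<..<b} \<Longrightarrow> (f has_real_derivative f' x) (at x)"
    and x: "x \<in> {a..b}"
  shows "(f has_real_derivative f' x) (at x within {a..b})"
proof -
  have eq: "f y = f a + integral {a..y} f'" if y: "y \<in> {a..b}" for y
  proof -
    have "(f' has_integral (f y - f a)) {a..y}"
    proof (rule fundamental_theorem_of_calculus_interior)
      show "a \<le> y" using y by auto
      show "continuous_on {a..y} f" using cf y by (auto intro: continuous_on_subset)
      fix z assume "z \<in> {a<..<y}"
      then have "z \<in> {a<..<b}" using y by auto
      then show "(f has_vector_derivative f' z) (at z)"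
        using d by (simp add: has_real_derivative_iff_has_vector_derivative)
    qed
    then show ?thesis by (simp add: integral_unique)
  qed
  have "((\<lambda>y. f a + integral {a..y} f') has_real_derivative (0 + f' x)) (at x within {a..b})"
    by (intro DERIV_add DERIV_const integral_has_real_derivative cf' x)
  then have "((\<lambda>y. f a + integral {a..y} f') has_real_derivative f' x) (at x within {a..b})" by simp
  then show ?thesis
  proof (rule has_field_derivative_transform_within[where d=1])
    show "(0::real) < 1" by simp
    show "x \<in> {a..b}" by (rule x)
    fix y assume "y \<in> {a..b}"
    then show "f a + integral {a..y} f' = f y" using eq by metis
  qed
qed



definition gf :: "nat \<Rightarrow> real \<Rightarrow> real" where "gf n q = q^(n-1) / (1+q)^n"

lemma gf_cont: "continuous_on {0..} (gf n)"
  unfolding gf_def by (intro continuous_intros) (auto simp: add_nonneg_eq_0_iff)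

lemma gf_deriv:
  assumes "n \<ge> 2" "q > 0"
  shows "(gf n has_real_derivative q^(n-2) * (real n - 1 - q) / (1+q)^(n+1)) (at q)"
proof -
  obtain m where n: "n = Suc (Suc m)" using assms(1) by (metis add_2_eq_Suc le_Suc_ex)
  have A: "1+q > 0" using assms by simp
  have "((\<lambda>q. q^(Suc m) / (1+q)^(Suc (Suc m))) has_real_derivative q^m * (real m + 1 - q) / (1+q)^(m+3)) (at q)"
  proof (rule DERIV_cong[OF DERIV_quotient[OF DERIV_pow DERIV_power[OF DERIV_add[OF DERIV_const DERIV_ident]]]])
    show "(1+q)^(Suc (Suc m)) \<noteq> 0" using A by simp
    have num: "(real (Suc m) * q^(Suc m - Suc 0)) * (1+q)^(Suc (Suc m)) - real (Suc (Suc m)) * ((0+1) * (1+q)^(Suc (Suc m) - Suc 0)) * q^(Suc m)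
        = q^m * (1+q)^(m+1) * (real m + 1 - q)"
      by (simp add: algebra_simps)
    have den: "((1+q)^(Suc (Suc m)))^Suc (Suc 0) = (1+q)^(m+1) * (1+q)^(m+3)"
    proof -
      have "((1+q)^(Suc (Suc m)))^Suc (Suc 0) = (1+q)^(Suc (Suc m) * Suc (Suc 0))" by (rule power_mult[symmetric])
      also have "\<dots> = (1+q)^((m+1)+(m+3))" by (simp add: numeral_3_eq_3)
      also have "\<dots> = (1+q)^(m+1) * (1+q)^(m+3)" by (rule power_add)
      finally show ?thesis .
    qed
    show "((real (Suc m) * q^(Suc m - Suc 0)) * (1+q)^(Suc (Suc m)) - real (Suc (Suc m)) * ((0+1) * (1+q)^(Suc (Suc m) - Suc 0)) * q^(Suc m)) /
          ((1+q)^(Suc (Suc m)))^Suc (Suc 0) = q^m * (real m + 1 - q) / (1+q)^(m+3)"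
      unfolding num den
    proof -
      have c: "\<And>a c Y W::real. Y \<noteq> 0 \<Longrightarrow> a * Y * c / (Y * W) = a * c / W" by simp
      show "q ^ m * (1 + q) ^ (m + 1) * (real m + 1 - q) / ((1 + q) ^ (m + 1) * (1 + q) ^ (m + 3)) =
    q ^ m * (real m + 1 - q) / (1 + q) ^ (m + 3)" by (rule c) (use A in simp)
    qed
  qed
  then show ?thesis unfolding gf_def n by (simp add: numeral_3_eq_3 add.commute)
qed

lemma gf_cont': "S \<subseteq> {0..} \<Longrightarrow> continuous_on S (gf n)"
  using gf_cont continuous_on_subset by blast

lemma gf_inc:
  assumes n: "n \<ge> 2" and "0 \<le> x" "x < y" "y \<le> real n - 1"
  shows "gf n x < gf n y"
proof (rule DERIV_pos_imp_increasing_open[OF \<open>x < y\<close>])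
  fix z assume z: "x < z" "z < y"
  then have "z > 0" using assms by simp
  moreover have "z^(n-2) * (real n - 1 - z) / (1+z)^(n+1) > 0" using z assms \<open>z > 0\<close> by simp
  ultimately show "\<exists>d. (gf n has_real_derivative d) (at z) \<and> d > 0" using gf_deriv[OF n] by blast
next
  show "continuous_on {x..y} (gf n)" by (rule gf_cont') (use assms in auto)
qed

lemma gf_dec:
  assumes n: "n \<ge> 2" and "real n - 1 \<le> x" "x < y"
  shows "gf n y < gf n x"
proof (rule DERIV_neg_imp_decreasing_open[OF \<open>x < y\<close>])
  fix z assume z: "x < z" "z < y"
  then have "z > 0" using assms by simp
  moreover have "z^(n-2) * (real n - 1 - z) / (1+z)^(n+1) < 0" using z assms \<open>z > 0\<close>
    by (intro divide_neg_pos mult_pos_neg) auto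
  ultimately show "\<exists>d. (gf n has_real_derivative d) (at z) \<and> d < 0" using gf_deriv[OF n] by blast
next
  show "continuous_on {x..y} (gf n)" by (rule gf_cont') (use assms in auto)
qed

lemma gf_zero: "n \<ge> 2 \<Longrightarrow> gf n 0 = 0" by (simp add: gf_def)

lemma gf_pos: "n \<ge> 2 \<Longrightarrow> q > 0 \<Longrightarrow> gf n q > 0" by (simp add: gf_def)

lemma gf_le: assumes "n \<ge> 2" "q > 0" shows "gf n q \<le> 1 / q"
proof -
  have "q^(n-1) \<le> (1+q)^(n-1)" using assms by (intro power_mono) auto
  moreover have "(1+q)^n = (1+q)^(n-1) * (1+q)"
  proof -
    have "n = Suc (n-1)" using assms by simp
    then have "(1+q)^n = (1+q)^(Suc (n-1))" by simp
    then show ?thesis by (simp only: power_Suc2)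
  qed
  ultimately have "gf n q \<le> (1+q)^(n-1) / ((1+q)^(n-1) * (1+q))" unfolding gf_def using assms
    by (simp only:) (intro divide_right_mono, auto)
  also have "\<dots> = 1 / (1+q)" using assms by simp
  also have "\<dots> \<le> 1 / q" using assms by (intro divide_left_mono) auto
  finally show ?thesis .
qed

lemma gf_roots_lt:
  assumes n: "n \<ge> 2" and b: "0 < b" "b < gf n (real n - 1)"
  shows "\<exists>q1 q2. 0 < q1 \<and> q1 < q2 \<and> {q. q > 0 \<and> gf n q = b} = {q1, q2}"
proof -
  have n1: "real n - 1 > 0" using n by simp
  have c1: "continuous_on {0..real n - 1} (gf n)" by (rule gf_cont') auto
  obtain q1 where q1: "0 \<le> q1" "q1 \<le> real n - 1" "gf n q1 = b"
    using IVT'[of "gf n" 0 b "real n - 1", OF _ less_imp_le[OF b(2)] less_imp_le[OF n1] c1] gf_zero[OF n] b by auto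
  have q1': "0 < q1" "q1 < real n - 1" using q1 b gf_zero[OF n] by (auto simp: less_le)
  define M where "M = real n + 1 / b"
  have "1 / b > 0" using b by simp
  then have M: "M > real n - 1" "M > 0" using n1 unfolding M_def by linarith+
  have "gf n M \<le> 1 / M" using gf_le[OF n M(2)] .
  also have "1 / M < b"
  proof -
    have "b * M = b * real n + 1" unfolding M_def using b by (simp add: distrib_left)
    moreover have "b * real n > 0" using b n by simp
    ultimately have "1 < b * M" by linarith
    then show ?thesis using M(2) by (simp add: pos_divide_less_eq mult.commute)
  qed
  finally have gM: "gf n M < b" .
  have cM: "continuous_on {real n - 1..M} (gf n)" by (rule gf_cont') (use n1 in auto)
  obtain q2 where q2: "real n - 1 \<le> q2" "q2 \<le> M" "gf n q2 = b"
    using IVT2'[of "gf n" M b "real n - 1", OF less_imp_le[OF gM] less_imp_le[OF b(2)] less_imp_le[OF M(1)] cM] by blast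
  have q2': "real n - 1 < q2" using q2 b by (auto simp: le_less)
  show ?thesis
  proof (rule exI[of _ q1], rule exI[of _ q2], intro conjI)
    show "0 < q1" by fact
    show "q1 < q2" using q1' q2' by simp
    show "{q. q > 0 \<and> gf n q = b} = {q1, q2}"
    proof (intro equalityI subsetI)
      fix q assume "q \<in> {q. q > 0 \<and> gf n q = b}"
      then have q: "q > 0" "gf n q = b" by auto
      consider "q < q1" | "q = q1" | "q1 < q \<and> q < real n - 1" | "q = real n - 1" | "real n - 1 < q \<and> q < q2" | "q = q2" | "q > q2"
        by linarith
      then show "q \<in> {q1, q2}"
      proof cases
        case 1 then have False using gf_inc[OF n, of q q1] q q1 q1' by simp
        then show ?thesis ..
      next
        case 2 then show ?thesis by simp
      next
        case 3 then have False using gf_inc[OF n, of q1 q] q q1 q1' by simp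
        then show ?thesis ..
      next
        case 4 then have False using q b by simp
        then show ?thesis ..
      next
        case 5 then have False using gf_dec[OF n, of q q2] q q2 q2' by simp
        then show ?thesis ..
      next
        case 6 then show ?thesis by simp
      next
        case 7 then have False using gf_dec[OF n, of q2 q] q q2 q2' by simp
        then show ?thesis ..
      qed
    next
      fix q assume "q \<in> {q1, q2}"
      then show "q \<in> {q. q > 0 \<and> gf n q = b}" using q1 q1' q2 q2' n1 by auto
    qed
  qed
qed

lemma gf_roots_eq:
  assumes n: "n \<ge> 2"
  shows "{q. q > 0 \<and> gf n q = gf n (real n - 1)} = {real n - 1}"
proof -
  have "q = real n - 1" if "q > 0" "gf n q = gf n (real n - 1)" for q
  proof -
    consider "q < real n - 1" | "q = real n - 1" | "q > real n - 1" by linarith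
    then show ?thesis
    proof cases
      case 1 then show ?thesis using gf_inc[OF n, of q "real n - 1"] that by simp
    next
      case 3 then show ?thesis using gf_dec[OF n, of "real n - 1" q] that by simp
    qed simp
  qed
  moreover have "real n - 1 > 0" using n by simp
  ultimately show ?thesis by blast
qed

lemma gf_max:
  assumes n: "n \<ge> 2" and q: "q > 0"
  shows "gf n q \<le> gf n (real n - 1)"
proof -
  consider "q < real n - 1" | "q = real n - 1" | "q > real n - 1" by linarith
  then show ?thesis
  proof cases
    case 1 then show ?thesis using gf_inc[OF n, of q "real n - 1"] q by simp
  next
    case 3 then show ?thesis using gf_dec[OF n, of "real n - 1" q] q by simp
  qed simp
qed



definition al :: "nat \<Rightarrow> real" where "al n = real n / (real n - 1)"
definition cc :: "nat \<Rightarrow> real" where "cc n = real n * al n"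
definition dq :: "nat \<Rightarrow> real \<Rightarrow> real \<Rightarrow> real" where
  "dq n q r = - cc n * q * r powr (al n - 1) / (1 + q * r powr al n)"
definition Vq :: "nat \<Rightarrow> real \<Rightarrow> real \<Rightarrow> real" where
  "Vq n q r = real n * ln (1+q) - real n * ln (1 + q * r powr al n)"
definition Uq :: "nat \<Rightarrow> real \<Rightarrow> real \<Rightarrow> real" where
  "Uq n q r = (if r \<in> {0..1} then Vq n q r else 0)"
definition Bf :: "nat \<Rightarrow> real \<Rightarrow> real" where
  "Bf n q = real n * cc n ^ (n-1) * gf n q"

lemma al_facts:
  assumes "n \<ge> 2"
  shows "al n > 1" "al n - 1 = 1 / (real n - 1)" "(al n - 1) * (real n - 1) = 1"
    "al n * (real n - 1) = real n" "cc n > 0" "cc n = real n * real n / (real n - 1)"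
proof -
  have n1: "real n - 1 > 0" using assms by simp
  show "al n > 1" unfolding al_def using n1 by simp
  show a: "al n - 1 = 1 / (real n - 1)" unfolding al_def using n1 by (simp add: field_simps)
  show "(al n - 1) * (real n - 1) = 1" unfolding a using n1 by simp
  show "al n * (real n - 1) = real n" unfolding al_def using n1 by simp
  show "cc n > 0" unfolding cc_def al_def using n1 by simp
  show "cc n = real n * real n / (real n - 1)" unfolding cc_def al_def by simp
qed

lemma phi_neg:
  assumes "n \<ge> 2" "z < 0"
  shows "phi n z = - ((-z)^(n-1))"
proof -
  have e: "n - 1 = Suc (n - 2)" using assms by simp
  have "\<bar>z\<bar> = -z" using assms by simp
  then have "phi n z = z * (-z)^(n-2)" unfolding phi_def by simp
  also have "\<dots> = - ((-z) * (-z)^(n-2))" by simp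
  also have "\<dots> = - ((-z)^(n-1))" unfolding e by (simp only: power_Suc)
  finally show ?thesis .
qed

lemma phi_sign:
  assumes "phi n z < 0" shows "z < 0"
proof (rule ccontr)
  assume "\<not> z < 0"
  then have "phi n z \<ge> 0" unfolding phi_def by simp
  then show False using assms by simp
qed

lemma phi_zero: "n \<ge> 2 \<Longrightarrow> phi n 0 = 0" by (simp add: phi_def)

lemma Vq_deriv:
  assumes n: "n \<ge> 2" and q: "q > 0" and r: "r > 0"
  shows "(Vq n q has_real_derivative dq n q r) (at r)"
proof -
  have pos: "1 + q * r powr al n > 0" using q r by (simp add: add_pos_nonneg)
  have inner: "((\<lambda>x. 1 + q * x powr al n) has_real_derivative (0 + q * (al n * r powr (al n - 1)))) (at r)"
    by (intro DERIV_add DERIV_const DERIV_cmult has_real_derivative_powr r)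
  have L: "((\<lambda>x. ln (1 + q * x powr al n)) has_real_derivative 1 / (1 + q * r powr al n) * (0 + q * (al n * r powr (al n - 1)))) (at r)"
    by (rule DERIV_chain2[OF DERIV_ln_divide[OF pos] inner])
  have "((\<lambda>r. real n * ln (1+q) - real n * ln (1 + q * r powr al n)) has_real_derivative
      0 - real n * (1 / (1 + q * r powr al n) * (0 + q * (al n * r powr (al n - 1))))) (at r)"
    by (intro DERIV_diff DERIV_const DERIV_cmult L)
  moreover have "0 - real n * (1 / (1 + q * r powr al n) * (0 + q * (al n * r powr (al n - 1)))) = dq n q r"
    unfolding dq_def cc_def by (simp add: field_simps)
  ultimately show ?thesis unfolding Vq_def by simp
qed

lemma Epos: "(q::real) > 0 \<Longrightarrow> 1 + q * r powr a > 0"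
  by (rule add_pos_nonneg[OF zero_less_one mult_nonneg_nonneg[OF less_imp_le powr_ge_zero]])

lemma powr_cont0: "a > 0 \<Longrightarrow> continuous_on {0..1} (\<lambda>r::real. r powr a)"
  by (rule continuous_on_powr'[OF continuous_on_id continuous_on_const]) auto

lemma dq_cont:
  assumes n: "n \<ge> 2" and q: "q > 0"
  shows "continuous_on {0..1} (dq n q)"
proof -
  have a1: "al n - 1 > 0" "al n > 0" using al_facts(1)[OF n] by linarith+
  have den: "\<forall>r\<in>{0..1}. 1 + q * r powr al n \<noteq> 0"
    using Epos[OF q] by (metis less_irrefl)
  show ?thesis unfolding dq_def
    by (intro continuous_intros powr_cont0 a1 den)
qed

lemma Vq_cont:
  assumes n: "n \<ge> 2" and q: "q > 0"
  shows "continuous_on {0..1} (Vq n q)"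
proof -
  have a1: "al n > 0" using al_facts(1)[OF n] by linarith
  have den: "\<forall>r\<in>{0..1}. 1 + q * r powr al n \<noteq> 0"
    using Epos[OF q] by (metis less_irrefl)
  show ?thesis unfolding Vq_def
    by (intro continuous_intros powr_cont0 a1 den)
qed

lemma Vq_deriv_within:
  assumes n: "n \<ge> 2" and q: "q > 0" and r: "r \<in> {0..1}"
  shows "(Vq n q has_real_derivative dq n q r) (at r within {0..1})"
  by (rule deriv_closed[OF _ Vq_cont[OF n q] dq_cont[OF n q] Vq_deriv[OF n q] r]) auto

lemma dq_neg: assumes n: "n \<ge> 2" and q: "q > 0" and r: "r > 0" shows "dq n q r < 0"
proof -
  have "cc n > 0" using al_facts(5)[OF n] .
  moreover have "r powr (al n - 1) > 0" using r by simp
  ultimately have "cc n * q * r powr (al n - 1) > 0" using q by simp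
  then show ?thesis unfolding dq_def using Epos[OF q, of r "al n"] by (simp add: divide_pos_pos)
qed

lemma phi_dq:
  assumes n: "n \<ge> 2" and q: "q > 0" and r: "r > 0"
  shows "phi n (dq n q r) = - ((cc n * q)^(n-1) * r / (1 + q * r powr al n)^(n-1))"
proof -
  have "phi n (dq n q r) = - ((- dq n q r)^(n-1))" by (rule phi_neg[OF n dq_neg[OF n q r]])
  also have "- dq n q r = (cc n * q) * r powr (al n - 1) / (1 + q * r powr al n)"
    unfolding dq_def by simp
  also have "(r powr (al n - 1))^(n-1) = r"
  proof -
    have "(r powr (al n - 1))^(n-1) = (r powr (al n - 1)) powr (real (n-1))"
      using r by (simp add: powr_realpow)
    also have "\<dots> = r powr ((al n - 1) * (real n - 1))" using n by (simp add: powr_powr of_nat_diff)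
    also have "\<dots> = r" using al_facts(3)[OF n] r by simp
    finally show ?thesis .
  qed
  then have "((cc n * q) * r powr (al n - 1) / (1 + q * r powr al n))^(n-1) = (cc n * q)^(n-1) * r / (1 + q * r powr al n)^(n-1)"
    by (simp add: power_divide power_mult_distrib)
  finally show ?thesis .
qed

lemma alg_hq:
 fixes E X P r q a K :: real and m :: nat
 assumes E: "E = 1 + q*X" and rP: "r*P = X" and a: "a*(real m + 1) = real m + 2" and Ep: "E > 0" and r: "r > 0"
 shows "-((K*1*E^(Suc m) - (real (Suc m) * ((0 + q*(a*P)) * E^(Suc m - Suc 0))) * (K*r)) / (E^(Suc m))^Suc(Suc 0))
        = -((real (Suc (Suc m)) - 1)/r) * (-(K*r/E^(Suc m))) - real (Suc (Suc m)) * K / E^(Suc (Suc m))"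
proof -
  have em: "E^m > 0" using Ep by simp
  have L: "(K*1*E^(Suc m) - (real (Suc m) * ((0 + q*(a*P)) * E^(Suc m - Suc 0))) * (K*r)) = K * E^m * (E - (real m + 2)*q*X)"
  proof -
    have "real (Suc m) * ((0 + q*(a*P)) * E^(Suc m - Suc 0)) * (K*r) = (a*(real m + 1)) * q * (r*P) * K * E^m"
      by (simp add: algebra_simps)
    also have "\<dots> = (real m + 2) * q * X * K * E^m" unfolding a rP ..
    finally show ?thesis by (simp add: algebra_simps)
  qed
  have D: "(E^(Suc m))^Suc(Suc 0) = E^m * E^(Suc (Suc m))" by (simp add: algebra_simps power2_eq_square)
  have "-((K*1*E^(Suc m) - (real (Suc m) * ((0 + q*(a*P)) * E^(Suc m - Suc 0))) * (K*r)) / (E^(Suc m))^Suc(Suc 0))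
     = - (K * (E - (real m + 2)*q*X) / E^(Suc (Suc m)))"
    unfolding L D using em by simp
  also have "\<dots> = K * ((real m + 1) * E - (real m + 2)) / E^(Suc (Suc m))"
  proof -
    have num: "-(K * (E - (real m + 2)*q*X)) = K * ((real m + 1) * E - (real m + 2))" unfolding E by (simp add: algebra_simps)
    show ?thesis by (simp only: minus_divide_left num)
  qed
  also have "\<dots> = -((real (Suc (Suc m)) - 1)/r) * (-(K*r/E^(Suc m))) - real (Suc (Suc m)) * K / E^(Suc (Suc m))"
    using Ep r by (simp add: field_simps)
  finally show ?thesis .
qed

definition hq :: "nat \<Rightarrow> real \<Rightarrow> real \<Rightarrow> real" where
  "hq n q r = - ((cc n * q)^(n-1) * r / (1 + q * r powr al n)^(n-1))"

lemma exp_Vq: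
  assumes q: "q > 0" and r: "r \<ge> 0"
  shows "exp (Vq n q r) = (1+q)^n / (1 + q * r powr al n)^n"
proof -
  have p1: "1 + q > 0" using q by simp
  have p2: "1 + q * r powr al n > 0" by (rule Epos[OF q])
  have "exp (Vq n q r) = exp (real n * ln (1+q)) / exp (real n * ln (1 + q * r powr al n))"
    unfolding Vq_def by (simp add: exp_diff)
  also have "\<dots> = (1+q)^n / (1 + q * r powr al n)^n"
    by (simp only: exp_of_nat_mult exp_ln[OF p1] exp_ln[OF p2])
  finally show ?thesis .
qed

lemma hq_deriv:
  assumes n: "n \<ge> 2" and q: "q > 0" and r: "r > 0"
  shows "(hq n q has_real_derivative (-((real n - 1)/r) * hq n q r - Bf n q * exp (Vq n q r))) (at r)"
proof -
  obtain m where nm: "n = Suc (Suc m)" using n by (metis add_2_eq_Suc le_Suc_ex)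
  define K where "K = (cc n * q)^(n-1)"
  define E where "E = 1 + q * r powr al n"
  define X where "X = r powr al n"
  define P where "P = r powr (al n - 1)"
  have Ep: "E > 0" unfolding E_def by (rule Epos[OF q])
  have inner: "((\<lambda>x. 1 + q * x powr al n) has_real_derivative (0 + q * (al n * P))) (at r)"
    unfolding P_def by (intro DERIV_add DERIV_const DERIV_cmult has_real_derivative_powr r)
  have pw: "((\<lambda>x. (1 + q * x powr al n) ^ Suc m) has_real_derivative
      of_nat (Suc m) * ((0 + q * (al n * P)) * E ^ (Suc m - Suc 0))) (at r)"
    unfolding E_def by (rule DERIV_power[OF inner])
  have nu: "((\<lambda>x. K * x) has_real_derivative K * 1) (at r)" by (intro DERIV_cmult DERIV_ident)
  have qt: "((\<lambda>x. K * x / (1 + q * x powr al n) ^ Suc m) has_real_derivative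
     (K * 1 * E ^ Suc m - (of_nat (Suc m) * ((0 + q * (al n * P)) * E ^ (Suc m - Suc 0))) * (K * r)) / (E ^ Suc m) ^ Suc (Suc 0)) (at r)"
    using DERIV_quotient[OF nu pw] Ep unfolding E_def by simp
  have mq: "((\<lambda>x. - (K * x / (1 + q * x powr al n) ^ Suc m)) has_real_derivative
     - ((K * 1 * E ^ Suc m - (of_nat (Suc m) * ((0 + q * (al n * P)) * E ^ (Suc m - Suc 0))) * (K * r)) / (E ^ Suc m) ^ Suc (Suc 0))) (at r)"
    by (rule DERIV_minus[OF qt])
  have rP: "r * P = X" unfolding P_def X_def using r by (simp add: powr_diff)
  have a: "al n * (real m + 1) = real m + 2" using al_facts(4)[OF n] unfolding nm by (simp add: add.commute)
  have eq: "- ((K * 1 * E ^ Suc m - (of_nat (Suc m) * ((0 + q * (al n * P)) * E ^ (Suc m - Suc 0))) * (K * r)) / (E ^ Suc m) ^ Suc (Suc 0))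
     = -((real (Suc (Suc m)) - 1)/r) * (-(K*r/E^(Suc m))) - real (Suc (Suc m)) * K / E^(Suc (Suc m))"
    by (rule alg_hq[OF _ rP a Ep r]) (simp add: E_def X_def)
  have B: "Bf n q * exp (Vq n q r) = real (Suc (Suc m)) * K / E^(Suc (Suc m))"
  proof -
    have "Bf n q * exp (Vq n q r) = real n * cc n ^ (n-1) * (q^(n-1) / (1+q)^n) * ((1+q)^n / E^n)"
      unfolding Bf_def gf_def E_def using exp_Vq[OF q, of r n] r by simp
    also have "\<dots> = real n * (cc n ^ (n-1) * q^(n-1)) / E^n" using q by (simp add: field_simps)
    also have "\<dots> = real (Suc (Suc m)) * K / E^(Suc (Suc m))" unfolding K_def nm by (simp add: power_mult_distrib)
    finally show ?thesis .
  qed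
  have H: "hq n q r = -(K*r/E^(Suc m))" unfolding hq_def K_def E_def nm by simp
  have "(hq n q has_real_derivative -((real (Suc (Suc m)) - 1)/r) * (-(K*r/E^(Suc m))) - real (Suc (Suc m)) * K / E^(Suc (Suc m))) (at r)"
  proof -
    have hqf: "hq n q = (\<lambda>x. - (K * x / (1 + q * x powr al n) ^ Suc m))"
      by (rule ext) (simp add: hq_def K_def nm)
    show ?thesis unfolding hqf using mq unfolding eq .
  qed
  moreover have "-((real n - 1)/r) * hq n q r - Bf n q * exp (Vq n q r) = -((real (Suc (Suc m)) - 1)/r) * (-(K*r/E^(Suc m))) - real (Suc (Suc m)) * K / E^(Suc (Suc m))"
    unfolding B H using nm by simp
  ultimately show ?thesis by simp
qed

lemma existence:
  assumes n: "n \<ge> 2" and q: "q > 0"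
  shows "Uq n q \<in> solution_set n (Bf n q)"
proof -
  have d1: "\<forall>r\<in>{0..1}. (Uq n q has_real_derivative dq n q r) (at r within {0..1})"
  proof
    fix r :: real assume r: "r \<in> {0..1}"
    show "(Uq n q has_real_derivative dq n q r) (at r within {0..1})"
    proof (rule has_field_derivative_transform_within[OF Vq_deriv_within[OF n q r] zero_less_one r])
      fix x assume "x \<in> {0..1::real}" then show "Vq n q x = Uq n q x" by (simp add: Uq_def)
    qed
  qed
  have d2: "\<forall>r\<in>{0<..<1}. ((\<lambda>s. phi n (dq n q s)) has_real_derivative
      (- ((real n - 1) / r) * phi n (dq n q r) - Bf n q * exp (Uq n q r))) (at r)"
  proof
    fix r :: real assume r: "r \<in> {0<..<1}"
    then have r0: "r > 0" and r1: "r \<in> {0..1}" by auto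
    have "((\<lambda>s. phi n (dq n q s)) has_real_derivative
      (- ((real n - 1) / r) * hq n q r - Bf n q * exp (Vq n q r))) (at r)"
    proof (rule has_field_derivative_transform_within_open[OF hq_deriv[OF n q r0], of "{0<..}"])
      show "open {0::real<..}" by simp
      show "r \<in> {0<..}" using r0 by simp
      fix x :: real assume "x \<in> {0<..}"
      then show "hq n q x = phi n (dq n q x)" using phi_dq[OF n q] by (simp add: hq_def)
    qed
    moreover have "hq n q r = phi n (dq n q r)" using phi_dq[OF n q r0] by (simp add: hq_def)
    moreover have "Vq n q r = Uq n q r" using r1 by (simp add: Uq_def)
    ultimately show "((\<lambda>s. phi n (dq n q s)) has_real_derivative
      (- ((real n - 1) / r) * phi n (dq n q r) - Bf n q * exp (Uq n q r))) (at r)" by simp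
  qed
  have d3: "dq n q 0 = 0" by (simp add: dq_def)
  have d4: "Uq n q 1 = 0" by (simp add: Uq_def Vq_def)
  have "is_solution n (Bf n q) (Uq n q)"
    unfolding is_solution_def using d1 dq_cont[OF n q] d2 d3 d4 by blast
  moreover have "\<forall>r. r \<notin> {0..1} \<longrightarrow> Uq n q r = 0" by (simp add: Uq_def)
  ultimately show ?thesis unfolding solution_set_def by blast
qed



lemma phi_cont: "continuous_on S d \<Longrightarrow> continuous_on S (\<lambda>r. phi n (d r))"
  unfolding phi_def by (intro continuous_intros)

lemma w_alg:
  fixes r P B e :: real
  assumes r: "r > 0" and nm: "n = Suc (Suc m)"
  shows "real (n - 1) * (1 * r ^ (n - 1 - Suc 0)) * P + (- ((real n - 1) / r) * P - B * e) * r ^ (n - 1)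
       = - B * r ^ (n - 1) * e"
  using r unfolding nm by (simp add: field_simps)

lemma F_alg:
  fixes s r e B :: real
  assumes s: "s > 0" and r: "r > 0" and nm: "n = Suc (Suc m)"
  shows "real n * (real (n - 1) * (s * (B * r ^ (n - 1) * e) / (real (n - 1) * s ^ (n - 1)) * s ^ (n - 1 - Suc 0)))
     - (real n - 1) / real n * (real n * (s * (B * r ^ (n - 1) * e) / (real (n - 1) * s ^ (n - 1)) * s ^ (n - Suc 0)))
     - B * (real n * (1 * r ^ (n - Suc 0)) * e + e * (- s / r) * r ^ n) = 0"
proof -
  have sm: "s^m > 0" "r^m > 0" using s r by simp_all
  define X where "X = B * r ^ (n - 1) * e"
  have g1: "\<And>k S X. k \<noteq> 0 \<Longrightarrow> S \<noteq> 0 \<Longrightarrow> k * (s * X / (k * (s * S)) * S) = (X::real)"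
    using s by (simp add: field_simps)
  have p1: "s ^ (n - 1) = s * s ^ (n - 1 - Suc 0)" using nm by simp
  have A: "real (n - 1) * (s * X / (real (n - 1) * s ^ (n - 1)) * s ^ (n - 1 - Suc 0)) = X"
    unfolding p1 by (rule g1) (use nm s in simp_all)
  have p2: "s ^ (n - Suc 0) = s ^ (n - 1)" by simp
  have g2: "\<And>k S X. k \<noteq> 0 \<Longrightarrow> S \<noteq> 0 \<Longrightarrow> real n * (s * X / (k * S) * S) = real n * s * X / (k::real)"
    by (simp add: field_simps)
  have C: "real n * (s * X / (real (n - 1) * s ^ (n - 1)) * s ^ (n - Suc 0)) = real n * s * X / (real n - 1)"
    unfolding p2 using nm s by (subst g2) (simp_all add: of_nat_diff)
  have D: "B * (real n * (1 * r ^ (n - Suc 0)) * e + e * (- s / r) * r ^ n) = real n * X - s * X"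
    using r sm unfolding nm X_def by (simp add: field_simps)
  have E: "(real n - 1) / real n * (real n * s * X / (real n - 1)) = s * X" using nm by simp
  show ?thesis unfolding X_def[symmetric] A C D E by simp
qed

lemma uniqueness:
  assumes n: "n \<ge> 2" and B: "B > 0" and u: "u \<in> solution_set n B"
  shows "\<exists>q>0. B = Bf n q \<and> u = Uq n q"
proof -
  obtain m where nm: "n = Suc (Suc m)" using n by (metis add_2_eq_Suc le_Suc_ex)
  have n1: "real n - 1 > 0" using n by simp
  from u obtain d where
    du: "\<forall>r\<in>{0..1}. (u has_real_derivative d r) (at r within {0..1})"
    and cd: "continuous_on {0..1} d"
    and dphi: "\<forall>r\<in>{0<..<1}. ((\<lambda>s. phi n (d s)) has_real_derivative
               (- ((real n - 1) / r) * phi n (d r) - B * exp (u r))) (at r)"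
    and d0: "d 0 = 0" and u1: "u 1 = 0"
    and uout: "\<forall>r. r \<notin> {0..1} \<longrightarrow> u r = 0"
    unfolding solution_set_def is_solution_def by blast
  have cu: "continuous_on {0..1} u"
    unfolding continuous_on_eq_continuous_within using du DERIV_continuous by blast
  have dua: "(u has_real_derivative d r) (at r)" if "r \<in> {0<..<1}" for r
  proof -
    have "(u has_real_derivative d r) (at r within {0..1})" using du that by auto
    moreover have "at r within {0..1} = at r" using that by (intro at_within_Icc_at) auto
    ultimately show ?thesis by simp
  qed
  define w where "w r = r^(n-1) * phi n (d r)" for r
  have cw: "continuous_on {0..1} w" unfolding w_def by (intro continuous_intros phi_cont cd)
  have w0: "w 0 = 0" unfolding w_def using n by simp
  have dw: "(w has_real_derivative - B * r ^ (n - 1) * exp (u r)) (at r)" if r: "r \<in> {0<..<1}" for r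
  proof -
    have "(w has_real_derivative real (n - 1) * (1 * r ^ (n - 1 - Suc 0)) * phi n (d r) +
        (- ((real n - 1) / r) * phi n (d r) - B * exp (u r)) * r ^ (n - 1)) (at r)"
      unfolding w_def[abs_def] by (intro DERIV_mult DERIV_power DERIV_ident) (use dphi r in auto)
    then show ?thesis using w_alg[of r n m "phi n (d r)" B "exp (u r)"] r nm by simp
  qed
  have wneg: "w r < 0" if r: "r \<in> {0<..1}" for r
  proof -
    have r0: "0 < r" using r by simp
    obtain l z where z: "0 < z" "z < r" "(w has_real_derivative l) (at z)" "w r - w 0 = (r - 0) * l"
      using MVT[OF r0 continuous_on_subset[OF cw]] dw r real_differentiable_def by fastforce
    have "l = - B * z ^ (n - 1) * exp (u z)" using DERIV_unique[OF z(3) dw[of z]] z r by simp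
    moreover have "B * z ^ (n - 1) * exp (u z) > 0" using B z by simp
    ultimately have "l < 0" by simp
    then show ?thesis using z w0 r0 by (simp add: mult_pos_neg)
  qed
  have dneg: "d r < 0" if r: "r \<in> {0<..1}" for r
  proof -
    have "r^(n-1) > 0" using r by simp
    moreover have "r^(n-1) * phi n (d r) < 0" using wneg[OF r] unfolding w_def .
    ultimately have "phi n (d r) < 0" by (meson mult_nonneg_nonneg less_imp_le not_less)
    then show ?thesis by (rule phi_sign)
  qed
  define s where "s r = - r * d r" for r
  have cs: "continuous_on {0..1} s" unfolding s_def by (intro continuous_intros cd)
  have s0: "s 0 = 0" unfolding s_def by simp
  have spos: "s r > 0" if r: "r \<in> {0<..1}" for r
    using dneg[OF r] r unfolding s_def by (simp add: mult_pos_neg)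
  have sS: "s r ^ (n-1) = - w r" if r: "r \<in> {0<..1}" for r
  proof -
    have "w r = r^(n-1) * (- ((- d r)^(n-1)))" unfolding w_def using phi_neg[OF n dneg[OF r]] by simp
    moreover have "(r * (- d r))^(n-1) = r^(n-1) * (-d r)^(n-1)" by (rule power_mult_distrib)
    ultimately have "- w r = (r * (- d r))^(n-1)" by simp
    moreover have "- r * d r = r * (- d r)" by simp
    ultimately show ?thesis unfolding s_def by metis
  qed
  have spowr: "s r = (- w r) powr (1 / (real n - 1))" if r: "r \<in> {0<..1}" for r
  proof -
    have "(- w r) powr (1 / (real n - 1)) = (s r powr (real (n - 1))) powr (1 / (real n - 1))"
      using sS[OF r] spos[OF r] by (simp add: powr_realpow)
    also have "\<dots> = s r powr (real (n-1) * (1 / (real n - 1)))" by (simp add: powr_powr)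
    also have "real (n-1) * (1 / (real n - 1)) = 1" using n1 n by (simp add: of_nat_diff)
    finally show ?thesis using spos[OF r] by simp
  qed
  define X where "X r = B * r^(n-1) * exp (u r)" for r
  have ds: "(s has_real_derivative s r * X r / (real (n-1) * s r ^ (n-1))) (at r)" if r: "r \<in> {0<..<1}" for r
  proof -
    have r': "r \<in> {0<..1}" using r by simp
    have wp: "- w r > 0" using wneg[OF r'] by simp
    have inner: "((\<lambda>x. - w x) has_real_derivative X r) (at r)"
      using DERIV_minus[OF dw[OF r]] unfolding X_def by simp
    have pw: "((\<lambda>x. (- w x) powr (1 / (real n - 1))) has_real_derivative
        (1 / (real n - 1)) * (- w r) powr (1 / (real n - 1) - 1) * X r) (at r)"
      by (rule DERIV_chain2[OF has_real_derivative_powr[OF wp] inner])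
    have eq: "(1 / (real n - 1)) * (- w r) powr (1 / (real n - 1) - 1) * X r = s r * X r / (real (n-1) * s r ^ (n-1))"
    proof -
      have "(- w r) powr (1 / (real n - 1) - 1) = (- w r) powr (1 / (real n - 1)) / (- w r)"
        using wp by (simp add: powr_diff)
      also have "\<dots> = s r / s r ^ (n-1)" using spowr[OF r'] sS[OF r'] by simp
      finally show ?thesis using n by (simp add: of_nat_diff)
    qed
    show ?thesis
    proof (rule has_field_derivative_transform_within_open[OF pw[unfolded eq], of "{0<..<1}"])
      show "open {0::real<..<1}" by simp
      show "r \<in> {0<..<1}" by (rule r)
      fix x :: real assume "x \<in> {0<..<1}"
      then show "(- w x) powr (1 / (real n - 1)) = s x" using spowr by simp
    qed
  qed
  define F where "F r = real n * s r ^ (n-1) - (real n - 1) / real n * s r ^ n - B * (r^n * exp (u r))" for r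
  have cF: "continuous_on {0..1} F" unfolding F_def by (intro continuous_intros cs cu)
  have F0: "F 0 = 0" unfolding F_def using s0 nm by simp
  have dF: "(F has_real_derivative 0) (at r)" if r: "r \<in> {0<..<1}" for r
  proof -
    have r0: "r > 0" using r by simp
    have D: "(F has_real_derivative
      real n * (real (n - 1) * (s r * X r / (real (n-1) * s r ^ (n-1)) * s r ^ (n - 1 - Suc 0)))
     - (real n - 1) / real n * (real n * (s r * X r / (real (n-1) * s r ^ (n-1)) * s r ^ (n - Suc 0)))
     - B * (real n * (1 * r ^ (n - Suc 0)) * exp (u r) + exp (u r) * d r * r ^ n)) (at r)"
      unfolding F_def[abs_def]
      by (intro DERIV_diff DERIV_cmult DERIV_power ds r DERIV_mult DERIV_ident DERIV_chain2[OF DERIV_exp dua])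
    have dr: "d r = - s r / r" unfolding s_def using r0 by simp
    show ?thesis using D unfolding dr X_def using F_alg[of "s r" r n m B "exp (u r)"] spos[of r] r nm
      by (simp add: mult.assoc)
  qed
  have Fz: "F r = 0" if r: "r \<in> {0..1}" for r
    using DERIV_isconst2[of 0 1 F r] cF dF r F0 by auto
  have ccv: "cc n = real n * real n / (real n - 1)" by (rule al_facts(6)[OF n])
  have key: "B * r^n * exp (u r) = s r ^ (n-1) * (real n - (real n - 1) / real n * s r)" if r: "r \<in> {0<..1}" for r
  proof -
    have "F r = 0" using Fz r by simp
    moreover have "s r ^ n = s r ^ (n-1) * s r" using nm by simp
    ultimately show ?thesis unfolding F_def by (simp add: algebra_simps)
  qed
  have slt: "s r < cc n" if r: "r \<in> {0<..1}" for r
  proof -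
    have "B * r^n * exp (u r) > 0" using B r by simp
    moreover have "s r ^ (n-1) > 0" using spos[OF r] by simp
    ultimately have "real n - (real n - 1) / real n * s r > 0" using key[OF r]
      by (metis zero_less_mult_pos)
    then have "(real n - 1) * s r < real n * real n" using n by (simp add: field_simps)
    then show ?thesis unfolding ccv using n1 by (simp add: field_simps)
  qed
  have ds2: "(s has_real_derivative s r * (cc n - s r) / (real n * r)) (at r)" if r: "r \<in> {0<..<1}" for r
  proof -
    have r': "r \<in> {0<..1}" and r0: "r > 0" using r by auto
    have Xr: "X r = s r ^ (n-1) * (real n - (real n - 1) / real n * s r) / r"
    proof -
      have "B * r^n * exp (u r) = r * X r" unfolding X_def nm by (simp add: algebra_simps)
      then show ?thesis using key[OF r'] r0 by (simp add: field_simps)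
    qed
    have sp: "s r ^ (n-1) > 0" using spos[OF r'] by simp
    have "s r * X r / (real (n-1) * s r ^ (n-1)) = s r * (real n - (real n - 1) / real n * s r) / (real (n-1) * r)"
    proof -
      have g: "\<And>a S Y k. S \<noteq> 0 \<Longrightarrow> a * (S * Y / r) / (k * S) = a * Y / (k * (r::real))"
        by (simp add: field_simps)
      show ?thesis unfolding Xr by (rule g) (metis sp less_irrefl)
    qed
    also have "\<dots> = s r * (cc n - s r) / (real n * r)"
      unfolding ccv using n1 n r0 by (simp add: field_simps of_nat_diff)
    finally show ?thesis using ds[OF r] by simp
  qed
  define Q where "Q r = s r / ((cc n - s r) * r powr al n)" for r
  have dQ: "(Q has_real_derivative 0) (at r)" if r: "r \<in> {0<..<1}" for r
  proof -
    have r': "r \<in> {0<..1}" and r0: "r > 0" using r by auto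
    define sp where "sp = s r * (cc n - s r) / (real n * r)"
    have den: "(cc n - s r) * r powr al n \<noteq> 0" using slt[OF r'] r0 by simp
    have D: "(Q has_real_derivative
       (sp * ((cc n - s r) * r powr al n) - ((0 - sp) * r powr al n + al n * r powr (al n - 1) * (cc n - s r)) * s r)
        / ((cc n - s r) * r powr al n) ^ Suc (Suc 0)) (at r)"
      unfolding Q_def[abs_def] sp_def
      by (intro DERIV_quotient DERIV_mult DERIV_diff DERIV_const ds2 r has_real_derivative_powr r0 den)
    have P: "r powr (al n - 1) = r powr al n / r" using r0 by (simp add: powr_diff)
    have num: "sp * ((cc n - s r) * r powr al n) - ((0 - sp) * r powr al n + al n * r powr (al n - 1) * (cc n - s r)) * s r = 0"
      unfolding sp_def P cc_def using r0 n by (simp add: field_simps)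
    show ?thesis using D unfolding num by simp
  qed
  have cQ: "continuous_on {a..1} Q" if a: "a > 0" for a
  proof -
    have sub: "{a..1} \<subseteq> {0..1}" using a by auto
    have ne: "\<forall>r\<in>{a..1}. (cc n - s r) * r powr al n \<noteq> 0"
    proof
      fix r assume "r \<in> {a..1}"
      then have r': "r \<in> {0<..1}" using a by auto
      then show "(cc n - s r) * r powr al n \<noteq> 0" using slt[OF r'] by simp
    qed
    show ?thesis unfolding Q_def
      by (intro continuous_intros continuous_on_subset[OF cs sub] continuous_on_subset[OF powr_cont0 sub] ne)
        (use al_facts(1)[OF n] in simp)
  qed
  have Qc: "Q r = Q 1" if r: "r \<in> {0<..1}" for r
  proof (cases "r = 1")
    case False
    then have "r < 1" "r > 0" using r by auto
    then show ?thesis using DERIV_isconst2[of r 1 Q 1] cQ[of r] dQ by auto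
  qed simp
  define q0 where "q0 = Q 1"
  have one: "(1::real) \<in> {0<..1}" by simp
  have q0p: "q0 > 0" unfolding q0_def Q_def using spos[OF one] slt[OF one] by simp
  have sform: "s r = cc n * q0 * r powr al n / (1 + q0 * r powr al n)" if r: "r \<in> {0<..1}" for r
  proof -
    have e: "s r / ((cc n - s r) * r powr al n) = q0" using Qc[OF r] unfolding q0_def Q_def by simp
    have p: "(cc n - s r) * r powr al n > 0" using slt[OF r] r by simp
    have g: "\<And>a D q::real. D > 0 \<Longrightarrow> a / D = q \<Longrightarrow> a = q * D" by (simp add: field_simps)
    have "s r = q0 * ((cc n - s r) * r powr al n)" by (rule g[OF p e])
    then have "s r * (1 + q0 * r powr al n) = cc n * q0 * r powr al n" by (simp add: algebra_simps)
    then show ?thesis using Epos[OF q0p, of r "al n"] by (simp add: field_simps)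
  qed
  have dform: "d r = dq n q0 r" if r: "r \<in> {0..1}" for r
  proof (cases "r = 0")
    case True then show ?thesis using d0 by (simp add: dq_def)
  next
    case False
    then have r': "r \<in> {0<..1}" and r0: "r > 0" using r by auto
    have "d r = - s r / r" unfolding s_def using r0 by simp
    also have "\<dots> = - cc n * q0 * (r powr al n / r) / (1 + q0 * r powr al n)"
      unfolding sform[OF r'] by simp
    also have "r powr al n / r = r powr (al n - 1)" using r0 by (simp add: powr_diff)
    finally show ?thesis unfolding dq_def .
  qed
  have ueq: "u r = Vq n q0 r" if r: "r \<in> {0..1}" for r
  proof -
    define g where "g x = u x - Vq n q0 x" for x
    have cg: "continuous_on {0..1} g" unfolding g_def by (intro continuous_intros cu Vq_cont[OF n q0p])
    have dg: "(g has_real_derivative 0) (at x)" if x: "0 < x" "x < 1" for x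
    proof -
      have "(g has_real_derivative d x - dq n q0 x) (at x)"
        unfolding g_def[abs_def] by (intro DERIV_diff dua Vq_deriv[OF n q0p]) (use x in auto)
      then show ?thesis using dform[of x] x by simp
    qed
    have "g r = g 0" using DERIV_isconst2[of 0 1 g r] cg dg r by auto
    moreover have "g 1 = g 0" using DERIV_isconst2[of 0 1 g 1] cg dg by auto
    moreover have "g 1 = 0" unfolding g_def using u1 by (simp add: Vq_def)
    ultimately show ?thesis unfolding g_def by simp
  qed
  have Bq: "B = Bf n q0"
  proof -
    have s1: "s 1 = cc n * q0 / (1 + q0)" using sform[OF one] by simp
    have "B = s 1 ^ (n-1) * (real n - (real n - 1) / real n * s 1)" using key[OF one] u1 by simp
    also have "real n - (real n - 1) / real n * s 1 = real n / (1 + q0)"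
    proof -
      have g: "\<And>a t::real. a > 1 \<Longrightarrow> (a - 1)/a * (a*a/(a-1) * t) = a * t" by (simp add: field_simps)
      have "(real n - 1) / real n * s 1 = real n * (q0 / (1 + q0))"
        unfolding s1 ccv using g[of "real n" "q0 / (1+q0)"] n1 by (simp add: mult.assoc)
      then show ?thesis using q0p by (simp add: field_simps)
    qed
    also have "s 1 ^ (n-1) = cc n ^ (n-1) * q0 ^ (n-1) / (1+q0)^(n-1)"
      unfolding s1 by (simp add: power_divide power_mult_distrib)
    also have "cc n ^ (n-1) * q0 ^ (n-1) / (1+q0)^(n-1) * (real n / (1 + q0)) = Bf n q0"
      unfolding Bf_def gf_def nm using q0p by (simp add: field_simps)
    finally show ?thesis .
  qed
  have "u = Uq n q0"
  proof
    fix r show "u r = Uq n q0 r"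
      using ueq uout unfolding Uq_def by (cases "r \<in> {0..1}") auto
  qed
  then show ?thesis using Bq q0p by blast
qed



lemma Kpos: "n \<ge> 2 \<Longrightarrow> real n * cc n ^ (n-1) > 0"
  using al_facts(5)[of n] by simp

lemma solset_eq:
  assumes n: "n \<ge> 2" and B: "B > 0"
  shows "solution_set n B = Uq n ` {q. q > 0 \<and> gf n q = B / (real n * cc n ^ (n-1))}"
proof (intro equalityI subsetI)
  fix u assume "u \<in> solution_set n B"
  then obtain q where q: "q > 0" "B = Bf n q" "u = Uq n q" using uniqueness[OF n B] by blast
  have "gf n q = B / (real n * cc n ^ (n-1))" unfolding q(2) Bf_def
    by (rule nonzero_mult_div_cancel_left[symmetric]) (metis Kpos[OF n] less_irrefl)
  then show "u \<in> Uq n ` {q. q > 0 \<and> gf n q = B / (real n * cc n ^ (n-1))}" using q by blast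
next
  fix u assume "u \<in> Uq n ` {q. q > 0 \<and> gf n q = B / (real n * cc n ^ (n-1))}"
  then obtain q where q: "q > 0" "gf n q = B / (real n * cc n ^ (n-1))" "u = Uq n q" by blast
  have "B = Bf n q" unfolding Bf_def q(2)
  proof -
    have g: "\<And>K x::real. K \<noteq> 0 \<Longrightarrow> x = K * (x / K)" by simp
    show "B = real n * cc n ^ (n - 1) * (B / (real n * cc n ^ (n - 1)))" by (rule g) (metis Kpos[OF n] less_irrefl)
  qed
  then show "u \<in> solution_set n B" using existence[OF n q(1)] q by simp
qed

lemma Uq_inj:
  assumes n: "n \<ge> 2" and "q1 > 0" "q2 > 0" "Uq n q1 = Uq n q2"
  shows "q1 = q2"
proof -
  have "Uq n q1 0 = Uq n q2 0" using assms by simp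
  then have "real n * ln (1 + q1) = real n * ln (1 + q2)" by (simp add: Uq_def Vq_def)
  then have "ln (1 + q1) = ln (1 + q2)" using n by simp
  then show ?thesis using assms by simp
qed

theorem proposition3p2:
  fixes n :: nat
  assumes "n > 1"
  shows "\<exists>Bn::real. Bn > 0
           \<and> (\<forall>B. 0 < B \<and> B < Bn \<longrightarrow> finite (solution_set n B) \<and> card (solution_set n B) = 2)
           \<and> finite (solution_set n Bn) \<and> card (solution_set n Bn) = 1
           \<and> (\<forall>B. B > Bn \<longrightarrow> solution_set n B = {})"
proof -
  have n: "n \<ge> 2" using assms by simp
  define K where "K = real n * cc n ^ (n-1)"
  have K: "K > 0" unfolding K_def by (rule Kpos[OF n])
  define Bn where "Bn = K * gf n (real n - 1)"
  have n1: "real n - 1 > 0" using n by simp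
  have Bn: "Bn > 0" unfolding Bn_def using K gf_pos[OF n n1] by simp
  have A: "finite (solution_set n B) \<and> card (solution_set n B) = 2" if B: "0 < B" "B < Bn" for B
  proof -
    have b: "0 < B / K" "B / K < gf n (real n - 1)" using B K unfolding Bn_def by (auto simp: field_simps)
    obtain q1 q2 where q: "0 < q1" "q1 < q2" "{q. q > 0 \<and> gf n q = B / K} = {q1, q2}"
      using gf_roots_lt[OF n b] by blast
    have "solution_set n B = {Uq n q1, Uq n q2}" using solset_eq[OF n B(1)] q(3) unfolding K_def by simp
    moreover have "Uq n q1 \<noteq> Uq n q2" using Uq_inj[OF n, of q1 q2] q by auto
    ultimately show ?thesis by simp
  qed
  have C: "finite (solution_set n Bn) \<and> card (solution_set n Bn) = 1"
  proof -
    have "Bn / K = gf n (real n - 1)" unfolding Bn_def using K by simp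
    then have "solution_set n Bn = {Uq n (real n - 1)}"
      using solset_eq[OF n Bn] gf_roots_eq[OF n] unfolding K_def by simp
    then show ?thesis by simp
  qed
  have D: "solution_set n B = {}" if B: "B > Bn" for B
  proof (rule ccontr)
    assume "solution_set n B \<noteq> {}"
    then obtain u where "u \<in> solution_set n B" by blast
    moreover have "B > 0" using B Bn by simp
    ultimately obtain q where q: "q > 0" "B = Bf n q" using uniqueness[OF n] by blast
    have "Bf n q \<le> Bn" unfolding Bf_def Bn_def K_def using gf_max[OF n q(1)] Kpos[OF n]
      by (simp add: mult_left_mono)
    then show False using q B by simp
  qed
  show ?thesis using Bn A C D by blast
qed

end
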